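(* Let $G$ be an abelian group, let $n\geq 0$, let $X\subseteq G$ be a finite, nonempty subset, let $S\in \mathcal F(G)$ be a sequence, and let $\mathscr A=A_1\cdot\ldots\cdot A_n$ be a setpartition with $\mathsf S(\mathscr A)\mid S$, $\mathrm{supp}(\mathsf S(\mathscr A)^{[-1]}\cdot S)\subseteq Z$, and $|A_i\setminus Z|\leq 1$ for all $i$, where $H\leq \mathsf H(X+\sum_{i=1}^{n}A_i)$ is a subgroup and $Z\subseteq G$ satisfies $Z=Z+H\subseteq \bigcap_{i=1}^n(A_i+H)$. Then: 1. $X+\Sigma_{n}(S)=X+\sum_{i=1}^{n}A_i$. 2. If $Z=g+H$ for some $g\in G$, then $X+\Sigma_{\ell}(S)=X+\sum_{i=1}^{n}A_i+(\ell-n)g$ for every $\ell\in [n,\,n+|\mathsf S(\mathscr A)^{[-1]}\cdot S|]$.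
   Context: A sequence over $G$ is a finite unordered list of elements of $G$ (element of the free abelian monoid $\mathcal F(G)$); $|S|$ is its length, $T\mid S$ means subsequence, $T^{[-1]}\cdot S$ is $S$ with the terms of $T$ removed, $\mathrm{supp}(S)$ is the set of elements occurring in $S$, $\sigma(T)$ is the sum of terms of $T$, and $\Sigma_\ell(S)=\{\sigma(T):T\mid S,\ |T|=\ell\}$. A setpartition is a sequence $\mathscr A=A_1\cdot\ldots\cdot A_n$ of finite nonempty subsets of $G$; $\mathsf S(\mathscr A)$ is the sequence of all elements of all $A_i$ (counted once per set containing it). $\mathsf H(A)=\{g:g+A=A\}$. Sumsets $A_1+\dots+A_n=\{a_1+\dots+a_n:a_i\in A_i\}$ (an empty sumset is $\{0\}$). *)

theory Defs
  imports Main "HOL-Library.Multiset"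
begin

definition setplus :: "'a::ab_group_add set \<Rightarrow> 'a set \<Rightarrow> 'a set" where
  "setplus A B = {a + b | a b. a \<in> A \<and> b \<in> B}"

definition sumset :: "'a::ab_group_add set list \<Rightarrow> 'a set" where
  "sumset As = foldr setplus As {0}"

definition seq_of_setpartition :: "'a set list \<Rightarrow> 'a multiset" where
  "seq_of_setpartition As = (\<Sum>A\<leftarrow>As. mset_set A)"

definition is_setpartition :: "'a set list \<Rightarrow> bool" where
  "is_setpartition As \<longleftrightarrow> (\<forall>A\<in>set As. finite A \<and> A \<noteq> {})"

definition Sigma_len :: "nat \<Rightarrow> 'a::ab_group_add multiset \<Rightarrow> 'a set" where
  "Sigma_len l S = {sum_mset T | T. T \<subseteq># S \<and> size T = l}"

definition stab :: "'a::ab_group_add set \<Rightarrow> 'a set" where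
  "stab A = {g. (\<lambda>a. g + a) ` A = A}"

definition is_subgroup :: "'a::ab_group_add set \<Rightarrow> bool" where
  "is_subgroup H \<longleftrightarrow> 0 \<in> H \<and> (\<forall>x\<in>H. \<forall>y\<in>H. x + y \<in> H) \<and> (\<forall>x\<in>H. - x \<in> H)"

definition nmul :: "nat \<Rightarrow> 'a::ab_group_add \<Rightarrow> 'a" where
  "nmul k g = (\<Sum>_<k. g)"

end

theory Submission
  imports Defs
begin

lemma sub_size_exists: "size (M::'a multiset) \<ge> k \<Longrightarrow> \<exists>N. N \<subseteq># M \<and> size N = k"
proof (induction M arbitrary: k)
  case empty then show ?case by auto
next
  case (add x M)
  show ?case
  proof (cases "k = 0")
    case True then show ?thesis by (intro exI[of _ "{#}"]) auto
  next
    case False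
    then obtain k' where k: "k = Suc k'" by (cases k) auto
    with add.prems have "size M \<ge> k'" by simp
    with add.IH obtain N where "N \<subseteq># M" "size N = k'" by blast
    then show ?thesis using k by (intro exI[of _ "add_mset x N"]) auto
  qed
qed

lemma sumset_Cons: "sumset (A # As) = setplus A (sumset As)"
  by (simp add: sumset_def)

lemma seq_Cons: "seq_of_setpartition (A # As) = mset_set A + seq_of_setpartition As"
  by (simp add: seq_of_setpartition_def)

lemma lemB:
  assumes "is_setpartition As" "s \<in> sumset As"
  shows "\<exists>M. M \<subseteq># seq_of_setpartition As \<and> size M = length As \<and> sum_mset M = s"
  using assms
proof (induction As arbitrary: s)
  case Nil then show ?case by (simp add: sumset_def)
next
  case (Cons A As)
  from Cons.prems have fA: "finite A" and pA: "is_setpartition As"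
    by (auto simp: is_setpartition_def)
  from Cons.prems(2) obtain a s' where a: "a \<in> A" "s' \<in> sumset As" "s = a + s'"
    by (auto simp: sumset_Cons setplus_def)
  from Cons.IH[OF pA a(2)] obtain M where M: "M \<subseteq># seq_of_setpartition As"
    "size M = length As" "sum_mset M = s'" by blast
  have "{#a#} \<subseteq># mset_set A" using a fA by simp
  then have "{#a#} + M \<subseteq># mset_set A + seq_of_setpartition As"
    using M(1) by (rule subset_mset.add_mono)
  then show ?case using M a by (intro exI[of _ "add_mset a M"]) (auto simp: seq_Cons)
qed

lemma lemA:
  assumes "\<forall>A\<in>set As. finite A \<and> card (A - Z) \<le> 1 \<and> Z \<subseteq> setplus A H"
    and "is_subgroup H"
    and "size T \<ge> length As"
    and "\<forall>t. t \<notin> Z \<longrightarrow> count T t \<le> count (seq_of_setpartition As) t"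
  shows "\<exists>T1 T2 s. T = T1 + T2 \<and> size T1 = length As \<and> set_mset T2 \<subseteq> Z
     \<and> s \<in> sumset As \<and> sum_mset T1 - s \<in> H"
  using assms
proof (induction As arbitrary: T)
  case Nil
  have "set_mset T \<subseteq> Z"
  proof
    fix t assume "t \<in># T"
    show "t \<in> Z"
    proof (rule ccontr)
      assume "t \<notin> Z"
      then have "count T t = 0" using Nil.prems(4) by (simp add: seq_of_setpartition_def)
      with \<open>t \<in># T\<close> show False by (simp add: count_eq_zero_iff)
    qed
  qed
  then show ?case using Nil.prems(2)
    by (intro exI[of _ "{#}"] exI[of _ T] exI[of _ 0]) (auto simp: sumset_def is_subgroup_def)
next
  case (Cons A As)
  have hA: "finite A" "card (A - Z) \<le> 1" "Z \<subseteq> setplus A H" using Cons.prems(1) by auto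
  have H0: "0 \<in> H" and Hadd: "\<And>x y. x \<in> H \<Longrightarrow> y \<in> H \<Longrightarrow> x + y \<in> H"
    using Cons.prems(2) by (auto simp: is_subgroup_def)
  show ?case
  proof (cases "\<exists>t. t \<in># T \<and> t \<notin> Z \<and> t \<in> A")
    case True
    then obtain t where t: "t \<in># T" "t \<notin> Z" "t \<in> A" by blast
    have fin: "finite (A - Z)" using hA by simp
    have "t \<in> A - Z" using t by simp
    then have "card (A - Z) \<noteq> 0" using fin by auto
    then have "card (A - Z) = 1" using hA(2) by simp
    then obtain u where "A - Z = {u}" by (rule card_1_singletonE)
    then have AZ: "A - Z = {t}" using \<open>t \<in> A - Z\<close> by simp
    define T' where "T' = T - {#t#}"
    have TT': "T = add_mset t T'" using t(1) by (simp add: T'_def)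
    have sz: "size T' \<ge> length As" using Cons.prems(3) TT' by simp
    have cnt: "\<forall>u. u \<notin> Z \<longrightarrow> count T' u \<le> count (seq_of_setpartition As) u"
    proof (intro allI impI)
      fix u assume u: "u \<notin> Z"
      have c: "count T u \<le> count (mset_set A) u + count (seq_of_setpartition As) u"
        using Cons.prems(4) u by (simp add: seq_Cons)
      show "count T' u \<le> count (seq_of_setpartition As) u"
      proof (cases "u = t")
        case True
        then show ?thesis using c t hA(1) by (simp add: T'_def)
      next
        case False
        then have "u \<notin> A" using AZ u by blast
        then show ?thesis using c hA(1) False by (simp add: T'_def)
      qed
    qed
    from Cons.IH[OF _ Cons.prems(2) sz cnt] Cons.prems(1) obtain T1 T2 s where
      IH: "T' = T1 + T2" "size T1 = length As" "set_mset T2 \<subseteq> Z" "s \<in> sumset As" "sum_mset T1 - s \<in> H"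
      by auto
    show ?thesis
      apply (rule exI[of _ "add_mset t T1"], rule exI[of _ T2], rule exI[of _ "t + s"])
      using IH TT' t by (auto simp: sumset_Cons setplus_def)
  next
    case False
    have cnt: "\<forall>u. u \<notin> Z \<longrightarrow> count T u \<le> count (seq_of_setpartition As) u"
    proof (intro allI impI)
      fix u assume u: "u \<notin> Z"
      show "count T u \<le> count (seq_of_setpartition As) u"
      proof (cases "u \<in># T")
        case True
        then have "u \<notin> A" using False u by blast
        moreover have "count T u \<le> count (mset_set A) u + count (seq_of_setpartition As) u"
          using Cons.prems(4) u by (simp add: seq_Cons)
        ultimately show ?thesis by simp
      qed (simp add: not_in_iff)
    qed
    have sz: "size T \<ge> length As" using Cons.prems(3) by simp
    from Cons.IH[OF _ Cons.prems(2) sz cnt] Cons.prems(1) obtain T1 T2 s where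
      IH: "T = T1 + T2" "size T1 = length As" "set_mset T2 \<subseteq> Z" "s \<in> sumset As" "sum_mset T1 - s \<in> H"
      by auto
    have "size T2 \<noteq> 0" using IH(1,2) Cons.prems(3) by auto
    then obtain z where z: "z \<in># T2" by (metis multiset_nonemptyE size_empty)
    then have "z \<in> Z" using IH(3) by auto
    then obtain a h where ah: "a \<in> A" "h \<in> H" "z = a + h" using hA(3) by (auto simp: setplus_def)
    have "sum_mset T1 - s + h \<in> H" using Hadd IH(5) ah(2) by blast
    moreover have "sum_mset (add_mset z T1) - (a + s) = sum_mset T1 - s + h" using ah(3)
      by (simp add: algebra_simps)
    moreover have "T = add_mset z T1 + (T2 - {#z#})" using IH(1) z by simp
    moreover have "set_mset (T2 - {#z#}) \<subseteq> Z" using IH(3) by (meson in_diffD subset_iff)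
    moreover have "a + s \<in> sumset (A # As)" using ah(1) IH(4) by (auto simp: sumset_Cons setplus_def)
    moreover have "size (add_mset z T1) = length (A # As)" using IH(2) by simp
    ultimately show ?thesis by metis
  qed
qed

lemma nmul_Suc: "nmul (Suc k) g = g + nmul k g"
  by (simp add: nmul_def)

lemma lemC:
  assumes "is_subgroup H" "set_mset M \<subseteq> (\<lambda>h. g + h) ` H"
  shows "sum_mset M - nmul (size M) g \<in> H"
  using assms(2)
proof (induction M)
  case empty then show ?case using assms(1) by (simp add: nmul_def is_subgroup_def)
next
  case (add x M)
  then obtain h where h: "h \<in> H" "x = g + h" by auto
  have "sum_mset M - nmul (size M) g + h \<in> H" using add h assms(1) by (auto simp: is_subgroup_def)
  moreover have eq: "sum_mset (add_mset x M) - nmul (size (add_mset x M)) g = sum_mset M - nmul (size M) g + h"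
    using h by (simp add: nmul_Suc algebra_simps)
  ultimately show ?case by (simp only: eq)
qed

theorem lemma2p4:
  fixes X Z H :: "'a::ab_group_add set"
    and S :: "'a multiset"
    and As :: "'a set list"
  assumes "finite X" and "X \<noteq> {}"
    and "is_setpartition As"
    and "seq_of_setpartition As \<subseteq># S"
    and "set_mset (S - seq_of_setpartition As) \<subseteq> Z"
    and "\<forall>A\<in>set As. card (A - Z) \<le> 1"
    and "is_subgroup H"
    and "H \<subseteq> stab (setplus X (sumset As))"
    and "Z = setplus Z H"
    and "Z \<subseteq> (\<Inter>A\<in>set As. setplus A H)"
  shows "setplus X (Sigma_len (length As) S) = setplus X (sumset As)
    \<and> (\<forall>g. Z = (\<lambda>h. g + h) ` H \<longrightarrow>
          (\<forall>l. length As \<le> l \<and> l \<le> length As + size (S - seq_of_setpartition As) \<longrightarrow>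
             setplus X (Sigma_len l S) = setplus (setplus X (sumset As)) {nmul (l - length As) g}))"
proof -
  define Y where "Y = setplus X (sumset As)"
  define n where "n = length As"
  define P where "P = seq_of_setpartition As"
  have Hadd: "\<And>x y. x \<in> H \<Longrightarrow> y \<in> H \<Longrightarrow> x + y \<in> H" and Hneg: "\<And>x. x \<in> H \<Longrightarrow> - x \<in> H"
    using assms(7) by (auto simp: is_subgroup_def)
  have stabY: "h + y \<in> Y" if hy: "h \<in> H" "y \<in> Y" for h y
  proof -
    have "(\<lambda>a. h + a) ` Y = Y" using assms(8) hy(1) unfolding Y_def stab_def by blast
    moreover have "h + y \<in> (\<lambda>a. h + a) ` Y" using hy(2) by (rule imageI)
    ultimately show ?thesis by simp
  qed
  have hyp: "\<forall>A\<in>set As. finite A \<and> card (A - Z) \<le> 1 \<and> Z \<subseteq> setplus A H"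
  proof
    fix A assume A: "A \<in> set As"
    have "finite A" using assms(3) A unfolding is_setpartition_def by blast
    moreover have "card (A - Z) \<le> 1" using assms(6) A by blast
    moreover have "Z \<subseteq> setplus A H" using assms(10) A by blast
    ultimately show "finite A \<and> card (A - Z) \<le> 1 \<and> Z \<subseteq> setplus A H" by blast
  qed
  have PS: "P \<subseteq># S" using assms(4) unfolding P_def .
  have SP: "S = P + (S - P)" using PS by (rule subset_mset.add_diff_inverse[symmetric])
  have sub: "\<exists>T1 T2 s. T = T1 + T2 \<and> size T1 = n \<and> set_mset T2 \<subseteq> Z \<and> s \<in> sumset As \<and> sum_mset T1 - s \<in> H"
    if T: "T \<subseteq># S" "size T \<ge> n" for T
  proof -
    have "\<forall>t. t \<notin> Z \<longrightarrow> count T t \<le> count P t"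
    proof (intro allI impI)
      fix t assume t: "t \<notin> Z"
      have "t \<notin># S - P" using assms(5) t unfolding P_def by blast
      then have "count (S - P) t = 0" by (simp add: not_in_iff)
      moreover have "count T t \<le> count S t" using T(1) by (simp add: subseteq_mset_def)
      moreover have "count P t \<le> count S t" using PS by (simp add: subseteq_mset_def)
      ultimately show "count T t \<le> count P t" by simp
    qed
    then have "\<forall>t. t \<notin> Z \<longrightarrow> count T t \<le> count (seq_of_setpartition As) t" unfolding P_def .
    moreover have "size T \<ge> length As" using T(2) unfolding n_def .
    ultimately show ?thesis using lemA[OF hyp assms(7)] unfolding n_def by blast
  qed
  have part1: "setplus X (Sigma_len n S) = Y"
  proof
    show "setplus X (Sigma_len n S) \<subseteq> Y"
    proof
      fix y assume "y \<in> setplus X (Sigma_len n S)"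
      then obtain x T where xT: "x \<in> X" "T \<subseteq># S" "size T = n" "y = x + sum_mset T"
        by (auto simp: setplus_def Sigma_len_def)
      then obtain T1 T2 s where d: "T = T1 + T2" "size T1 = n" "s \<in> sumset As" "sum_mset T1 - s \<in> H"
        using sub[of T] by auto
      then have "T2 = {#}" using xT by auto
      then have "y = (sum_mset T1 - s) + (x + s)" using xT d by (simp add: algebra_simps)
      moreover have "x + s \<in> Y" using xT d by (auto simp: Y_def setplus_def)
      moreover have "(sum_mset T1 - s) + (x + s) \<in> Y" using stabY d(4) \<open>x + s \<in> Y\<close> by blast
      ultimately show "y \<in> Y" by simp
    qed
  next
    show "Y \<subseteq> setplus X (Sigma_len n S)"
    proof
      fix y assume "y \<in> Y"
      then obtain x s where xs: "x \<in> X" "s \<in> sumset As" "y = x + s" by (auto simp: Y_def setplus_def)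
      obtain M where "M \<subseteq># P" "size M = n" "sum_mset M = s"
        using lemB[OF assms(3) xs(2)] unfolding P_def n_def by blast
      moreover have "P \<subseteq># S" using assms(4) P_def by simp
      ultimately have "s \<in> Sigma_len n S" unfolding Sigma_len_def
        using subset_mset.order_trans by blast
      then show "y \<in> setplus X (Sigma_len n S)" using xs
        unfolding setplus_def by blast
    qed
  qed
  have part2: "setplus X (Sigma_len l S) = setplus Y {nmul (l - n) g}"
    if g: "Z = (\<lambda>h. g + h) ` H" and l: "n \<le> l" "l \<le> n + size (S - P)" for g l
  proof
    show "setplus X (Sigma_len l S) \<subseteq> setplus Y {nmul (l - n) g}"
    proof
      fix y assume "y \<in> setplus X (Sigma_len l S)"
      then obtain x T where xT: "x \<in> X" "T \<subseteq># S" "size T = l" "y = x + sum_mset T"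
        by (auto simp: setplus_def Sigma_len_def)
      then obtain T1 T2 s where d: "T = T1 + T2" "size T1 = n" "set_mset T2 \<subseteq> Z" "s \<in> sumset As" "sum_mset T1 - s \<in> H"
        using sub[of T] l by auto
      have sz2: "size T2 = l - n" using d xT by simp
      have h2: "sum_mset T2 - nmul (l - n) g \<in> H" using lemC[OF assms(7), of T2 g] d(3) g sz2 by simp
      have "y = ((sum_mset T1 - s) + (sum_mset T2 - nmul (l - n) g) + (x + s)) + nmul (l - n) g"
        using xT d by (simp add: algebra_simps)
      moreover have "x + s \<in> Y" using xT d by (auto simp: Y_def setplus_def)
      moreover have "(sum_mset T1 - s) + (sum_mset T2 - nmul (l - n) g) + (x + s) \<in> Y"
        using stabY Hadd d(5) h2 \<open>x + s \<in> Y\<close> by blast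
      ultimately show "y \<in> setplus Y {nmul (l - n) g}" unfolding setplus_def by blast
    qed
  next
    show "setplus Y {nmul (l - n) g} \<subseteq> setplus X (Sigma_len l S)"
    proof
      fix y assume "y \<in> setplus Y {nmul (l - n) g}"
      then obtain y0 where y0: "y0 \<in> Y" "y = y0 + nmul (l - n) g" by (auto simp: setplus_def)
      obtain U where U: "U \<subseteq># S - P" "size U = l - n" using sub_size_exists[of "l - n" "S - P"] l by (metis le_diff_conv add.commute)
      have "set_mset U \<subseteq> Z" using U(1) assms(5) unfolding P_def by (meson mset_subset_eqD subset_iff)
      then have hU: "sum_mset U - nmul (l - n) g \<in> H" using lemC[OF assms(7), of U g] g U(2) by simp
      define h where "h = sum_mset U - nmul (l - n) g"
      have "- h \<in> H" using Hneg hU h_def by blast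
      then have "- h + y0 \<in> Y" using stabY y0(1) by blast
      then obtain x s where xs: "x \<in> X" "s \<in> sumset As" "- h + y0 = x + s" by (auto simp: Y_def setplus_def)
      obtain M where M: "M \<subseteq># P" "size M = n" "sum_mset M = s"
        using lemB[OF assms(3) xs(2)] unfolding P_def n_def by blast
      have "M + U \<subseteq># P + (S - P)" using M(1) U(1) by (rule subset_mset.add_mono)
      then have "M + U \<subseteq># S" using SP by simp
      moreover have "size (M + U) = l" using M U l by simp
      moreover have "y = x + sum_mset (M + U)"
      proof -
        have "y = (- h + y0) + (h + nmul (l - n) g)" using y0(2) by (simp add: algebra_simps)
        also have "h + nmul (l - n) g = sum_mset U" using h_def by simp
        also have "- h + y0 = x + s" by (rule xs(3))
        finally show ?thesis using M(3) by (simp add: algebra_simps)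
      qed
      ultimately have "sum_mset (M + U) \<in> Sigma_len l S" "y = x + sum_mset (M + U)"
        unfolding Sigma_len_def by blast+
      then show "y \<in> setplus X (Sigma_len l S)" using xs(1)
        unfolding setplus_def by blast
    qed
  qed
  show ?thesis using part1 part2 unfolding Y_def n_def P_def by blast
qed

end
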